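(* There is an absolute constant $C$ such that for every simple temporal clique on $n$ vertices and every backward fireworks cover $S^+_T$ of it (for any outcome of the arbitrary choices in the construction), $|S^+_T|\le \frac{3}{4}\binom{n}{2}+Cn$.
   Context: A simple temporal clique is a pair $\mathcal{G}=(G,\lambda)$ where $G=(V,E)$ is the complete graph on a finite set $V$ of $n$ vertices and $\lambda:E\to\mathbb{N}$ assigns to each edge a single integer label such that any two distinct edges sharing an endpoint have different labels; the label of an arc $(x,y)$ is $\lambda(\{x,y\})$. For a vertex $v$, $e^+(v)$ is the edge incident to $v$ with largest label. Backward construction: let $E^+$ be the set of arcs $(v,u)$ with $\{u,v\}=e^+(v)$, except that if $e^+(u)=e^+(v)=\{u,v\}$ only one of the two arcs $(u,v),(v,u)$ is included (arbitrarily). Initialize $E^+_T:=E^+$. For every vertex $v$ of in-degree at least $2$ in $(V,E^+)$, let $(u_1,v),\dots,(u_\ell,v)$ be its in-arcs in $E^+$, where $(u_\ell,v)$ has the smallest label; for each $i<\ell$, if $u_i$ has in-degree $0$ in $(V,E^+)$, replace $(u_i,v)$ by $(v,u_i)$ in $E^+_T$, and otherwise remove $(u_i,v)$ from $E^+_T$. A collector is a vertex of in-degree $0$ in $(V,E^+_T)$. The backward fireworks cover is $S^+_T=\{\{u,v\}\in E:(u,v)\in E^+_T\}\cup\{\{u,v\}\in E: u \text{ is a collector}\}$. *)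

theory Defs
  imports Complex_Main
begin

text \<open>Simple temporal clique on vertex set V: the complete graph on V with
  one label per edge (edges are 2-element sets), locally injective.\<close>
definition simple_temporal_clique :: "nat set \<Rightarrow> (nat set \<Rightarrow> nat) \<Rightarrow> bool" where
  "simple_temporal_clique V lab \<longleftrightarrow> finite V \<and>
     (\<forall>u\<in>V. \<forall>v\<in>V. \<forall>w\<in>V. u \<noteq> v \<and> u \<noteq> w \<and> v \<noteq> w \<longrightarrow> lab {u,v} \<noteq> lab {u,w})"

definition top_edge :: "nat set \<Rightarrow> (nat set \<Rightarrow> nat) \<Rightarrow> nat \<Rightarrow> nat \<Rightarrow> bool" where
  "top_edge V lab v u \<longleftrightarrow> v \<in> V \<and> u \<in> V \<and> u \<noteq> v \<and>
     (\<forall>x\<in>V. x \<noteq> v \<and> x \<noteq> u \<longrightarrow> lab {v,x} < lab {v,u})"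

text \<open>Ep is a valid outcome of the construction of E^+ (including the arbitrary
  choice of one arc for each mutual pair e^+(u) = e^+(v) = {u,v}).\<close>
definition backward_arcs :: "nat set \<Rightarrow> (nat set \<Rightarrow> nat) \<Rightarrow> (nat \<times> nat) set \<Rightarrow> bool" where
  "backward_arcs V lab Ep \<longleftrightarrow>
     (\<forall>(a,b)\<in>Ep. top_edge V lab a b) \<and>
     (\<forall>v\<in>V. \<forall>u. top_edge V lab v u \<longrightarrow> (v,u) \<in> Ep \<or> (top_edge V lab u v \<and> (u,v) \<in> Ep)) \<and>
     (\<forall>u v. (u,v) \<in> Ep \<longrightarrow> (v,u) \<notin> Ep)"

definition indeg :: "(nat \<times> nat) set \<Rightarrow> nat \<Rightarrow> nat" where
  "indeg A v = card {u. (u,v) \<in> A}"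

definition min_in_arc :: "(nat set \<Rightarrow> nat) \<Rightarrow> (nat \<times> nat) set \<Rightarrow> nat \<Rightarrow> nat \<Rightarrow> bool" where
  "min_in_arc lab Ep u v \<longleftrightarrow> (u,v) \<in> Ep \<and> (\<forall>w. (w,v) \<in> Ep \<longrightarrow> lab {u,v} \<le> lab {w,v})"

definition ET :: "(nat set \<Rightarrow> nat) \<Rightarrow> (nat \<times> nat) set \<Rightarrow> (nat \<times> nat) set" where
  "ET lab Ep =
     {(u,v). (u,v) \<in> Ep \<and> (indeg Ep v < 2 \<or> min_in_arc lab Ep u v)} \<union>
     {(v,u). (u,v) \<in> Ep \<and> indeg Ep v \<ge> 2 \<and> \<not> min_in_arc lab Ep u v \<and> indeg Ep u = 0}"

definition collector :: "nat set \<Rightarrow> (nat set \<Rightarrow> nat) \<Rightarrow> (nat \<times> nat) set \<Rightarrow> nat \<Rightarrow> bool" where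
  "collector V lab Ep v \<longleftrightarrow> v \<in> V \<and> (\<forall>u. (u,v) \<notin> ET lab Ep)"

definition fireworks_cover :: "nat set \<Rightarrow> (nat set \<Rightarrow> nat) \<Rightarrow> (nat \<times> nat) set \<Rightarrow> nat set set" where
  "fireworks_cover V lab Ep =
     {{u,v} | u v. (u,v) \<in> ET lab Ep} \<union>
     {{u,v} | u v. collector V lab Ep u \<and> v \<in> V \<and> v \<noteq> u}"

end

theory Submission
  imports Defs
begin

lemma stc_inj:
  assumes "simple_temporal_clique V lab" "u \<in> V" "v \<in> V" "w \<in> V" "u \<noteq> v" "u \<noteq> w" "v \<noteq> w"
  shows "lab {u,v} \<noteq> lab {u,w}"
proof -
  have "\<forall>u\<in>V. \<forall>v\<in>V. \<forall>w\<in>V. u \<noteq> v \<and> u \<noteq> w \<and> v \<noteq> w \<longrightarrow> lab {u,v} \<noteq> lab {u,w}"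
    using assms(1) unfolding simple_temporal_clique_def by (elim conjE)
  then show ?thesis using assms(2-7) by simp
qed

lemma arc_props:
  assumes "backward_arcs V lab Ep" "(u,v) \<in> Ep"
  shows "u \<in> V" "v \<in> V" "u \<noteq> v"
  using assms unfolding backward_arcs_def top_edge_def by auto

lemma arc_unique:
  assumes "backward_arcs V lab Ep" "(u,v) \<in> Ep" "(u,v') \<in> Ep"
  shows "v = v'"
proof (rule ccontr)
  assume ne: "v \<noteq> v'"
  have t1: "top_edge V lab u v" "top_edge V lab u v'" using assms unfolding backward_arcs_def by auto
  then have "lab {u,v'} < lab {u,v}" "lab {u,v} < lab {u,v'}" using ne unfolding top_edge_def by auto
  then show False by simp
qed

lemma collector_noin:
  assumes stc: "simple_temporal_clique V lab" and ba: "backward_arcs V lab Ep"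
    and c: "collector V lab Ep w"
  shows "(u,w) \<notin> Ep"
proof
  assume uw: "(u,w) \<in> Ep"
  define A where "A = {x. (x,w) \<in> Ep}"
  have fin: "finite A"
  proof -
    have "A \<subseteq> V" using arc_props[OF ba] unfolding A_def by auto
    then show ?thesis using stc finite_subset unfolding simple_temporal_clique_def by auto
  qed
  have "u \<in> A" using uw A_def by auto
  then obtain u0 where u0: "u0 \<in> A" "\<forall>x\<in>A. lab {u0,w} \<le> lab {x,w}"
    using ex_has_least_nat[of "\<lambda>x. x \<in> A" u "\<lambda>x. lab {x,w}"] by blast
  have "min_in_arc lab Ep u0 w" using u0 unfolding min_in_arc_def A_def by auto
  then have "(u0,w) \<in> ET lab Ep" unfolding ET_def using u0 A_def by auto
  then show False using c unfolding collector_def by auto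
qed

lemma top_exists:
  assumes stc: "simple_temporal_clique V lab" and w: "w \<in> V" and two: "card V \<ge> 2"
  shows "\<exists>u. top_edge V lab w u"
proof -
  have fin: "finite V" using stc unfolding simple_temporal_clique_def by auto
  have "V - {w} \<noteq> {}"
  proof
    assume "V - {w} = {}"
    then have "V \<subseteq> {w}" by auto
    then have "card V \<le> card {w}" using card_mono[of "{w}" V] by blast
    then have "card V \<le> 1" by simp
    then show False using two by simp
  qed
  then have "Max ((\<lambda>x. lab {w,x}) ` (V - {w})) \<in> (\<lambda>x. lab {w,x}) ` (V - {w})"
    using fin by (intro Max_in) auto
  then obtain u where u1: "Max ((\<lambda>x. lab {w,x}) ` (V - {w})) = lab {w,u}" "u \<in> V - {w}"
    by (rule imageE)
  have "lab {w,x} \<le> lab {w,u}" if "x \<in> V - {w}" for x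
  proof -
    have "lab {w,x} \<in> (\<lambda>x. lab {w,x}) ` (V - {w})" using that by (rule imageI)
    then have "lab {w,x} \<le> Max ((\<lambda>x. lab {w,x}) ` (V - {w}))" using fin by (intro Max_ge) auto
    then show ?thesis using u1(1) by simp
  qed
  then have u: "u \<in> V - {w}" "\<forall>x\<in>V-{w}. lab {w,x} \<le> lab {w,u}"
    using u1(2) by auto
  have "top_edge V lab w u"
    unfolding top_edge_def
  proof (intro conjI ballI impI)
    fix x assume x: "x \<in> V" "x \<noteq> w \<and> x \<noteq> u"
    have xu: "x \<noteq> u" "x \<noteq> w" "u \<noteq> w" using x u(1) by auto
    have "u \<in> V" using u(1) by blast
    then have "lab {w,x} \<noteq> lab {w,u}" using stc_inj[OF stc w x(1)] xu by blast
    moreover have "lab {w,x} \<le> lab {w,u}" using u(2) x(1) xu by blast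
    ultimately show "lab {w,x} < lab {w,u}" by simp
  qed (use u w in auto)
  then show ?thesis by blast
qed

lemma collector_out:
  assumes stc: "simple_temporal_clique V lab" and ba: "backward_arcs V lab Ep"
    and c: "collector V lab Ep w" and two: "card V \<ge> 2"
  shows "\<exists>v. (w,v) \<in> Ep"
proof -
  have w: "w \<in> V" using c collector_def by auto
  obtain u where u: "top_edge V lab w u" using top_exists[OF stc w two] by blast
  then have "(w,u) \<in> Ep \<or> (u,w) \<in> Ep" using ba w unfolding backward_arcs_def by blast
  then show ?thesis using collector_noin[OF stc ba c] by auto
qed

lemma collector_inj:
  assumes stc: "simple_temporal_clique V lab" and ba: "backward_arcs V lab Ep"
    and c1: "collector V lab Ep w1" and c2: "collector V lab Ep w2"
    and a1: "(w1,v) \<in> Ep" and a2: "(w2,v) \<in> Ep"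
  shows "w1 = w2"
proof (rule ccontr)
  assume ne: "w1 \<noteq> w2"
  have fin: "finite {x. (x,v) \<in> Ep}"
  proof -
    have "{x. (x,v) \<in> Ep} \<subseteq> V" using arc_props[OF ba] by auto
    then show ?thesis using stc finite_subset unfolding simple_temporal_clique_def by auto
  qed
  have "{w1,w2} \<subseteq> {x. (x,v) \<in> Ep}" using a1 a2 by auto
  then have "card {w1,w2} \<le> indeg Ep v" unfolding indeg_def using card_mono[OF fin] by blast
  then have ge2: "indeg Ep v \<ge> 2" using ne by simp
  have i1: "indeg Ep w1 = 0" "indeg Ep w2 = 0"
    using collector_noin[OF stc ba c1] collector_noin[OF stc ba c2] unfolding indeg_def by auto
  have "min_in_arc lab Ep w1 v"
  proof (rule ccontr)
    assume "\<not> min_in_arc lab Ep w1 v"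
    then have "(v,w1) \<in> ET lab Ep" unfolding ET_def using a1 ge2 i1 by blast
    then show False using c1 unfolding collector_def by auto
  qed
  moreover have "min_in_arc lab Ep w2 v"
  proof (rule ccontr)
    assume "\<not> min_in_arc lab Ep w2 v"
    then have "(v,w2) \<in> ET lab Ep" unfolding ET_def using a2 ge2 i1 by blast
    then show False using c2 unfolding collector_def by auto
  qed
  ultimately have eq: "lab {w1,v} = lab {w2,v}" using a1 a2 unfolding min_in_arc_def
    by (meson antisym)
  have vs: "w1 \<in> V" "w2 \<in> V" "v \<in> V" "w1 \<noteq> v" "w2 \<noteq> v" using arc_props[OF ba a1] arc_props[OF ba a2] by auto
  have "lab {v,w1} \<noteq> lab {v,w2}" using stc_inj[OF stc vs(3) vs(1) vs(2)] vs(4,5) ne by blast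
  then show False using eq by (simp add: insert_commute)
qed

lemma cover_sub: 
  assumes ba: "backward_arcs V lab Ep"
  shows "fireworks_cover V lab Ep \<subseteq> {B. B \<subseteq> V \<and> card B = 2}"
proof -
  have "(u,v) \<in> ET lab Ep \<Longrightarrow> u \<in> V \<and> v \<in> V \<and> u \<noteq> v" for u v
    unfolding ET_def using arc_props[OF ba] by blast
  then show ?thesis unfolding fireworks_cover_def collector_def by auto
qed

lemma card_ET:
  assumes stc: "simple_temporal_clique V lab" and ba: "backward_arcs V lab Ep"
  shows "card {{u,v} | u v. (u,v) \<in> ET lab Ep} \<le> 2 * card V"
proof -
  have fin: "finite V" using stc unfolding simple_temporal_clique_def by auto
  have inj: "inj_on fst Ep" using arc_unique[OF ba] by (intro inj_onI) (metis prod.collapse)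
  have sub: "fst ` Ep \<subseteq> V" using arc_props[OF ba] by auto
  have finEp: "finite Ep" using inj sub fin by (meson finite_imageD finite_subset)
  have cEp: "card Ep \<le> card V" using card_inj_on_le[OF inj sub fin] .
  have "ET lab Ep \<subseteq> Ep \<union> converse Ep" unfolding ET_def by auto
  moreover have "finite (Ep \<union> converse Ep)" using finEp by auto
  ultimately have "card (ET lab Ep) \<le> card (Ep \<union> converse Ep)" by (rule card_mono[rotated])
  also have "\<dots> \<le> card Ep + card (converse Ep)" by (rule card_Un_le)
  also have "\<dots> = 2 * card Ep" by simp
  finally have cET: "card (ET lab Ep) \<le> 2 * card V" using cEp by linarith
  have finET: "finite (ET lab Ep)" using \<open>ET lab Ep \<subseteq> Ep \<union> converse Ep\<close> finEp
    by (meson finite_Un finite_converse finite_subset)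
  have "{{u,v} | u v. (u,v) \<in> ET lab Ep} = (\<lambda>(u,v). {u,v}) ` ET lab Ep" by auto
  then have "card {{u,v} | u v. (u,v) \<in> ET lab Ep} \<le> card (ET lab Ep)"
    using card_image_le[OF finET] by metis
  then show ?thesis using cET by linarith
qed

lemma arith_final:
  fixes n m c :: nat
  assumes "n = c + m" "c \<le> m"
  shows "real (n choose 2) - real (m choose 2) \<le> 3/4 * real (n choose 2) + real n"
proof -
  have h: "real (k choose 2) = real k * (real k - 1) / 2" for k :: nat
  proof -
    have "even (k * (k - 1))" by auto
    then have "2 * (k choose 2) = k * (k - 1)" unfolding choose_two by simp
    then have "2 * real (k choose 2) = real k * real (k - 1)" by (metis of_nat_mult of_nat_numeral)
    then show ?thesis by (cases k) auto
  qed
  have a: "real n / 2 \<le> real m" using assms by simp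
  have b: "real n / 2 * (real n / 2) \<le> real m * real m"
    using mult_mono[OF a a] by simp
  have c: "real m \<le> real n" using assms by simp
  show ?thesis unfolding h using b c by (simp add: algebra_simps) (simp add: field_simps)
qed

theorem theorem5:
  shows "\<exists>C::real. \<forall>(V::nat set) (lab::nat set \<Rightarrow> nat) (Ep::(nat \<times> nat) set).
           simple_temporal_clique V lab \<longrightarrow> backward_arcs V lab Ep \<longrightarrow>
           real (card (fireworks_cover V lab Ep))
             \<le> 3/4 * real (card V choose 2) + C * real (card V)"
proof (intro exI allI impI)
  fix V :: "nat set" and lab Ep
  assume stc: "simple_temporal_clique V lab" and ba: "backward_arcs V lab Ep"
  have fin: "finite V" using stc unfolding simple_temporal_clique_def by auto
  define P2 where "P2 = (\<lambda>A::nat set. {B. B \<subseteq> A \<and> card B = 2})"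
  have cP: "card (P2 A) = card A choose 2" if "finite A" for A
    unfolding P2_def using n_subsets[OF that] .
  have finP: "finite (P2 V)" unfolding P2_def using fin by auto
  show "real (card (fireworks_cover V lab Ep)) \<le> 3/4 * real (card V choose 2) + 3 * real (card V)"
  proof (cases "card V \<ge> 2")
    case False
    have "card (fireworks_cover V lab Ep) \<le> card (P2 V)"
      using card_mono[OF finP] cover_sub[OF ba] unfolding P2_def by blast
    also have "\<dots> = 0" using cP[OF fin] False by simp
    finally show ?thesis by simp
  next
    case two: True
    define K where "K = {w. collector V lab Ep w}"
    have KV: "K \<subseteq> V" unfolding K_def collector_def by auto
    have "\<forall>w\<in>K. \<exists>v. (w,v) \<in> Ep" using collector_out[OF stc ba _ two] K_def by auto
    then obtain h where h: "\<And>w. w \<in> K \<Longrightarrow> (w, h w) \<in> Ep" by metis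
    have "inj_on h K"
      by (intro inj_onI) (metis K_def collector_inj[OF stc ba] h mem_Collect_eq)
    moreover have "h ` K \<subseteq> V - K"
    proof
      fix x assume "x \<in> h ` K"
      then obtain w where w: "w \<in> K" "x = h w" by auto
      have "x \<in> V" using arc_props[OF ba h[OF w(1)]] w by auto
      moreover have "x \<notin> K" using collector_noin[OF stc ba] h[OF w(1)] w K_def by auto
      ultimately show "x \<in> V - K" by auto
    qed
    ultimately have cK: "card K \<le> card (V - K)" using card_inj_on_le fin by blast
    have CE: "{{u,v} | u v. collector V lab Ep u \<and> v \<in> V \<and> v \<noteq> u} \<subseteq> P2 V - P2 (V - K)"
      unfolding P2_def K_def collector_def by auto
    have "card {{u,v} | u v. collector V lab Ep u \<and> v \<in> V \<and> v \<noteq> u} \<le> card (P2 V - P2 (V - K))"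
      using card_mono[OF _ CE] finP by blast
    also have "\<dots> = card (P2 V) - card (P2 (V - K))"
      by (rule card_Diff_subset) (use fin in \<open>auto simp: P2_def\<close>)
    finally have c2: "card {{u,v} | u v. collector V lab Ep u \<and> v \<in> V \<and> v \<noteq> u}
        \<le> (card V choose 2) - (card (V - K) choose 2)" using cP fin by simp
    have mono2: "card (V - K) choose 2 \<le> card V choose 2"
      by (rule binomial_right_mono) (use fin in \<open>simp add: card_mono\<close>)
    have "card (fireworks_cover V lab Ep) \<le> card {{u,v} | u v. (u,v) \<in> ET lab Ep}
       + card {{u,v} | u v. collector V lab Ep u \<and> v \<in> V \<and> v \<noteq> u}"
      unfolding fireworks_cover_def by (rule card_Un_le)
    then have "card (fireworks_cover V lab Ep) + (card (V - K) choose 2) \<le> 2 * card V + (card V choose 2)"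
      using card_ET[OF stc ba] c2 mono2 by linarith
    then have "real (card (fireworks_cover V lab Ep) + (card (V - K) choose 2)) \<le> real (2 * card V + (card V choose 2))"
      by (simp only: of_nat_le_iff)
    then have r: "real (card (fireworks_cover V lab Ep)) + real (card (V - K) choose 2)
        \<le> 2 * real (card V) + real (card V choose 2)"
      by simp
    have "card V = card K + card (V - K)"
    proof -
      have "finite K" using fin KV finite_subset by blast
      then have "card (V - K) = card V - card K" using card_Diff_subset KV by blast
      moreover have "card K \<le> card V" using card_mono[OF fin KV] .
      ultimately show ?thesis by simp
    qed
    from arith_final[OF this cK] r show ?thesis by linarith
  qed
qed

end
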